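(* Let $\varphi\colon Y\to X$ be a torus-equivariant embedding of a normal toric variety $Y$ into a smooth toric variety $X$ with no torus factors, let $L\subseteq\mathbb{Z}^n$ be the associated lattice, and let $\psi\colon L_{\mathbb{R}}\to\mathbb{Z}^n$ be the ceiling stratification with $L_{\mathbb{R}}$ given its standard cell structure. Then (i) the real torus $T_\varphi$ equals $L_{\mathbb{R}}/L$ and the cell structure on it induced from the standard cell structure of $L_{\mathbb{R}}$ coincides with the stratification of $T_\varphi$ by the toric arrangement of Hanlon–Hicks–Lazarev; and (ii) the line bundle that the Hanlon–Hicks–Lazarev construction assigns to a cell $\sigma'\subseteq L_{\mathbb{R}}/L$ is $\mathcal{O}_X(-\psi(\sigma))$, where $\sigma\subseteq L_{\mathbb{R}}$ is any cell representing $\sigma'$.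
   Context: Let $X$ be a smooth toric variety with no torus factors whose fan has $n$ rays with primitive generators $\bm u_1,\dots,\bm u_n\in N_X$, and $Y$ a normal toric variety with a torus-equivariant embedding $\varphi\colon Y\to X$, corresponding to an injective $\mathbb{Z}$-linear map $\overline\varphi\colon N_Y\to N_X$ of one-parameter-subgroup lattices with dual surjection $\overline\varphi^*\colon M_X\to M_Y$ of character lattices. Set $L=\ker\overline\varphi^*\subseteq M_X$, embedded in $\mathbb{Z}^n$ by $\nu(\bm m)=(\bm u_1\cdot\bm m,\dots,\bm u_n\cdot\bm m)$; $\mathbb{Z}^n$ is identified with the group of torus-invariant divisors of $X$ and $\mathcal{O}_X(\bm u)$ denotes the corresponding line bundle. $L_{\mathbb{R}}=L\otimes\mathbb{R}\subseteq\mathbb{R}^n$ has the standard cell structure: the polyhedral cell structure from the periodic arrangement of affine hyperplanes $\{\bm p\in L_{\mathbb{R}}:p_i=j\}$, $1\le i\le n$, $j\in\mathbb{Z}$ (equivalently $\{\bm q: \bm u_i\cdot\bm q=j\}$); it descends to a cell structure on $L_{\mathbb{R}}/L$. The ceiling stratification is $\psi(\bm p)=(\lceil p_1\rceil,\dots,\lceil p_n\rceil)$, constant on open cells. The Hanlon–Hicks–Lazarev (HHL) data: the real torus $T_\varphi$ is the kernel of the induced map $(M_X\otimes\mathbb{R})/M_X\to(M_Y\otimes\mathbb{R})/M_Y$; it is stratified by the toric arrangement of subtori cut out by the conditions $\bm u_i\cdot\bm q\in\mathbb{Z}$, $1\le i\le n$; and to each point $\bm q\in M_X\otimes\mathbb{R}$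 HHL assign the line bundle $\mathcal{O}_X\big((\lfloor-\bm u_1\cdot\bm q\rfloor,\dots,\lfloor-\bm u_n\cdot\bm q\rfloor)\big)$, which is constant on strata. *)

theory Defs
  imports "HOL-Analysis.Analysis"
begin

text \<open>Lattices: M_X = int^'d (characters of X), N_X = int^'d, M_Y = int^'e,
 rays indexed by a finite type 'r (so n = CARD('r)), Z^n = int^'r (torus-invariant divisors).\<close>

definition ofintv :: "int^'a \<Rightarrow> real^'a" where
  "ofintv m = (\<chi> k. of_int (m $ k))"

definition intvecs :: "(real^'a) set" where
  "intvecs = {x. \<forall>k. x $ k \<in> \<int>}"

definition dotR :: "int^'d \<Rightarrow> real^'d \<Rightarrow> real" where
  "dotR u q = (\<Sum>k\<in>UNIV. of_int (u $ k) * q $ k)"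

definition dotZ :: "int^'d \<Rightarrow> int^'d \<Rightarrow> int" where
  "dotZ u m = (\<Sum>k\<in>UNIV. u $ k * m $ k)"

definition nuZ :: "('r \<Rightarrow> int^'d) \<Rightarrow> int^'d \<Rightarrow> int^'r" where
  "nuZ u m = (\<chi> i. dotZ (u i) m)"

definition nuR :: "('r \<Rightarrow> int^'d) \<Rightarrow> real^'d \<Rightarrow> real^'r" where
  "nuR u q = (\<chi> i. dotR (u i) q)"

text \<open>the dual map phi^* : M_X \<rightarrow> M_Y given by an integer matrix P, and its real extension\<close>
definition PZ :: "int^'d^'e \<Rightarrow> int^'d \<Rightarrow> int^'e" where
  "PZ P m = (\<chi> j. \<Sum>k\<in>UNIV. P $ j $ k * m $ k)"

definition PR :: "int^'d^'e \<Rightarrow> real^'d \<Rightarrow> real^'e" where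
  "PR P q = (\<chi> j. \<Sum>k\<in>UNIV. of_int (P $ j $ k) * q $ k)"

definition Lat :: "int^'d^'e \<Rightarrow> (int^'d) set" where
  "Lat P = {m. PZ P m = 0}"

text \<open>L embedded in R^n via nu, and L_R = L tensor R as the real span of it in R^n\<close>
definition Lnu :: "('r \<Rightarrow> int^'d) \<Rightarrow> int^'d^'e \<Rightarrow> (real^'r) set" where
  "Lnu u P = (\<lambda>m. ofintv (nuZ u m)) ` Lat P"

definition LR :: "('r \<Rightarrow> int^'d) \<Rightarrow> int^'d^'e \<Rightarrow> (real^'r) set" where
  "LR u P = span (Lnu u P)"

text \<open>Open cells of the standard cell structure on L_R: points with the same position
  relative to every hyperplane p_i = j (j integer), i.e. same floor and ceiling in each coordinate.\<close>
definition std_cell :: "('r \<Rightarrow> int^'d) \<Rightarrow> int^'d^'e \<Rightarrow> real^'r \<Rightarrow> (real^'r) set" where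
  "std_cell u P p = {p' \<in> LR u P. \<forall>i. \<lceil>p' $ i\<rceil> = \<lceil>p $ i\<rceil> \<and> \<lfloor>p' $ i\<rfloor> = \<lfloor>p $ i\<rfloor>}"

definition psi :: "real^'r \<Rightarrow> int^'r" where
  "psi p = (\<chi> i. \<lceil>p $ i\<rceil>)"

text \<open>Concrete model of the real torus (M_X tensor R)/M_X: q \<mapsto> (exp(2 pi i q_k))_k.\<close>
definition Etor :: "real^'d \<Rightarrow> complex^'d" where
  "Etor q = (\<chi> k. cis (2 * pi * q $ k))"

text \<open>T_phi = kernel of (M_X)_R/M_X \<rightarrow> (M_Y)_R/M_Y\<close>
definition Tphi :: "int^'d^'e \<Rightarrow> (complex^'d) set" where
  "Tphi P = Etor ` {q. PR P q \<in> intvecs}"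

definition arr_subtorus :: "('r \<Rightarrow> int^'d) \<Rightarrow> 'r \<Rightarrow> (complex^'d) set" where
  "arr_subtorus u i = Etor ` {q. dotR (u i) q \<in> \<int>}"

definition arr_type :: "('r \<Rightarrow> int^'d) \<Rightarrow> complex^'d \<Rightarrow> 'r set" where
  "arr_type u z = {i. z \<in> arr_subtorus u i}"

definition hhl_stratum :: "('r \<Rightarrow> int^'d) \<Rightarrow> int^'d^'e \<Rightarrow> complex^'d \<Rightarrow> (complex^'d) set" where
  "hhl_stratum u P z =
     connected_component_set {w \<in> Tphi P. arr_type u w = arr_type u z} z"

definition hhl_divisor :: "('r \<Rightarrow> int^'d) \<Rightarrow> real^'d \<Rightarrow> int^'r" where
  "hhl_divisor u q = (\<chi> i. \<lfloor>- dotR (u i) q\<rfloor>)"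

text \<open>O_X(D) \<cong> O_X(D') iff D - D' is principal, i.e. in nu(M_X)\<close>
definition same_line_bundle :: "('r \<Rightarrow> int^'d) \<Rightarrow> int^'r \<Rightarrow> int^'r \<Rightarrow> bool" where
  "same_line_bundle u D D' \<longleftrightarrow> (\<exists>m. D - D' = nuZ u m)"

definition primitive :: "int^'d \<Rightarrow> bool" where
  "primitive v \<longleftrightarrow> v \<noteq> 0 \<and> (\<forall>c. (\<forall>k. c dvd v $ k) \<longrightarrow> is_unit c)"

definition cone_of :: "('r \<Rightarrow> int^'d) \<Rightarrow> 'r set \<Rightarrow> (real^'d) set" where
  "cone_of u \<sigma> = convex_cone hull ((\<lambda>i. ofintv (u i)) ` \<sigma>)"

text \<open>A smooth fan with ray generators u (cones given by their sets of rays):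
  rays are 1-cones, closed under faces, cones meet in common faces, and the generators of
  each cone are part of a Z-basis of N_X.\<close>
definition smooth_fan :: "('r \<Rightarrow> int^'d) \<Rightarrow> 'r set set \<Rightarrow> bool" where
  "smooth_fan u \<Sigma> \<longleftrightarrow>
     (\<forall>i. {i} \<in> \<Sigma>) \<and>
     (\<forall>\<sigma>\<in>\<Sigma>. \<forall>\<tau>. \<tau> \<subseteq> \<sigma> \<longrightarrow> \<tau> \<in> \<Sigma>) \<and>
     (\<forall>\<sigma>\<in>\<Sigma>. \<forall>\<tau>\<in>\<Sigma>. cone_of u \<sigma> \<inter> cone_of u \<tau> = cone_of u (\<sigma> \<inter> \<tau>)) \<and>
     (\<forall>\<sigma>\<in>\<Sigma>. \<exists>(B::int^'d^'d) C f. B ** C = mat 1 \<and> inj_on f \<sigma> \<and> (\<forall>i\<in>\<sigma>. B $ f i = u i))"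

end

theory Submission imports Defs begin

lemma cis_eq_iff_int: "cis a = cis b \<longleftrightarrow> (\<exists>n::int. a - b = of_int n * (2*pi))"
proof -
  have "cis a = cis b \<longleftrightarrow> cis (a - b) = 1"
    by (metis cis_divide divide_self_if cis_neq_zero nonzero_divide_eq_eq)
  also have "\<dots> \<longleftrightarrow> cos (a - b) = 1"
  proof
    assume "cis (a - b) = 1"
    then have "Re (cis (a - b)) = Re 1" by simp
    then show "cos (a - b) = 1" by simp
  next
    assume c: "cos (a - b) = 1"
    then have "sin (a - b) = 0" by (rule cos_one_sin_zero)
    with c show "cis (a - b) = 1" by (simp add: complex_eq_iff)
  qed
  also have "\<dots> \<longleftrightarrow> (\<exists>n::int. a - b = of_int n * (2*pi))"
    by (simp add: cos_one_2pi_int mult.assoc)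
  finally show ?thesis .
qed

lemma cis2pi_eq_iff: "cis (2*pi*a) = cis (2*pi*b) \<longleftrightarrow> a - b \<in> \<int>"
proof -
  have "cis (2*pi*a) = cis (2*pi*b) \<longleftrightarrow> (\<exists>n::int. 2*pi*a - 2*pi*b = of_int n * (2*pi))"
    by (rule cis_eq_iff_int)
  also have "\<dots> \<longleftrightarrow> (\<exists>n::int. a - b = of_int n)"
  proof (intro ex_cong1)
    fix n :: int
    have "2*pi*a - 2*pi*b = of_int n*(2*pi) \<longleftrightarrow> (2*pi)*(a - b - of_int n) = 0"
      by (auto simp: algebra_simps)
    then show "2*pi*a - 2*pi*b = of_int n*(2*pi) \<longleftrightarrow> a - b = of_int n" by simp
  qed
  also have "\<dots> \<longleftrightarrow> a - b \<in> \<int>" by (auto elim: Ints_cases)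
  finally show ?thesis .
qed

lemma Etor_eq_iff: "Etor q = Etor q' \<longleftrightarrow> (\<forall>k. q$k - q'$k \<in> \<int>)"
  by (simp add: Etor_def vec_eq_iff cis2pi_eq_iff)

lemma ofintv_simps[simp]: "ofintv m $ k = of_int (m $ k)"
  by (simp add: ofintv_def)

lemma ofintv_add: "ofintv (a + b) = ofintv a + ofintv b"
  and ofintv_diff: "ofintv (a - b) = ofintv a - ofintv b"
  and ofintv_minus: "ofintv (- a) = - ofintv a"
  by (simp_all add: vec_eq_iff)

lemma dotR_inner: "dotR u q = ofintv u \<bullet> q"
  by (simp add: dotR_def inner_vec_def)

lemma nuR_comp[simp]: "nuR u q $ i = dotR (u i) q"
  by (simp add: nuR_def)

lemma nuZ_comp[simp]: "nuZ u m $ i = dotZ (u i) m"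
  by (simp add: nuZ_def)

lemma linear_nuR: "linear (nuR u)"
  by (rule linearI) (simp_all add: vec_eq_iff dotR_inner inner_add_right)

lemma PR_comp: "PR P q $ j = (\<Sum>k\<in>UNIV. of_int (P $ j $ k) * q $ k)"
  by (simp add: PR_def)

lemma linear_PR: "linear (PR P)"
  by (rule linearI) (simp_all add: vec_eq_iff PR_comp sum.distrib distrib_left sum_distrib_left algebra_simps)

lemma dotR_ofintv: "dotR u (ofintv m) = of_int (dotZ u m)"
  by (simp add: dotR_def dotZ_def)

lemma nuR_ofintv: "nuR u (ofintv m) = ofintv (nuZ u m)"
  by (simp add: vec_eq_iff dotR_ofintv)

lemma PR_ofintv: "PR P (ofintv m) = ofintv (PZ P m)"
  by (simp add: vec_eq_iff PR_comp PZ_def)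

lemma nuR_inj:
  assumes "span (range (\<lambda>i. ofintv (u i))) = UNIV"
  shows "inj (nuR u)"
proof -
  have "q = 0" if "nuR u q = 0" for q
  proof -
    have "orthogonal q y" if "y \<in> range (\<lambda>i. ofintv (u i))" for y
      using that \<open>nuR u q = 0\<close> by (auto simp: orthogonal_def vec_eq_iff dotR_inner inner_commute)
    then have "orthogonal q q" using orthogonal_to_span assms by blast
    then show ?thesis by (simp add: orthogonal_def)
  qed
  then show ?thesis using linear_nuR[of u]
    by (metis linear_inj_iff_eq_0)
qed

lemma int_vec_ofintv: "(\<forall>k. x$k \<in> \<int>) \<Longrightarrow> x = ofintv (\<chi> k. \<lfloor>x$k\<rfloor>)"
  by (simp add: vec_eq_iff)

lemma of_int_ite: "real_of_int (if b then 1 else 0) = (if b then 1 else 0)"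
  by simp

lemma ofintv_zero[simp]: "ofintv 0 = 0"
  by (simp add: vec_eq_iff)

lemma ofintv_inj: "ofintv a = ofintv b \<Longrightarrow> a = b"
  by (simp add: vec_eq_iff)

lemma dotR_add: "dotR u (a + b) = dotR u a + dotR u b"
  by (simp add: dotR_inner inner_add_right)

lemma dotR_diff: "dotR u (a - b) = dotR u a - dotR u b"
  by (simp add: dotR_inner inner_diff_right)

lemma nuZ_minus: "nuZ u (- m) = - nuZ u m"
  by (simp add: vec_eq_iff dotZ_def sum_negf)

lemma PR_diff: "PR P (a - b) = PR P a - PR P b"
  using linear_diff[OF linear_PR] by blast

lemma nuR_diff: "nuR u (a - b) = nuR u a - nuR u b"
  using linear_diff[OF linear_nuR] by blast

lemma PR_add: "PR P (a + b) = PR P a + PR P b"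
  using linear_add[OF linear_PR] by blast

lemma LR_eq:
  assumes surj: "surj (PZ P)"
  shows "LR u P = nuR u ` {l. PR P l = 0}"
proof -
  have Lnu_eq: "Lnu u P = nuR u ` (ofintv ` Lat P)"
    by (simp add: Lnu_def image_image nuR_ofintv)
  have "span (ofintv ` Lat P) = {l. PR P l = 0}"
  proof
    show "span (ofintv ` Lat P) \<subseteq> {l. PR P l = 0}"
    proof (rule span_minimal)
      show "ofintv ` Lat P \<subseteq> {l. PR P l = 0}"
        by (auto simp: Lat_def PR_ofintv)
      show "subspace {l. PR P l = 0}" by (rule linear_subspace_kernel[OF linear_PR])
    qed
  next
    define s where "s j = (SOME m. PZ P m = axis j 1)" for j
    have s: "PZ P (s j) = axis j 1" for j
    proof -
      have "\<exists>m. PZ P m = axis j 1" using surj by (metis surjD)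
      then show ?thesis unfolding s_def by (rule someI_ex)
    qed
    have s': "(\<Sum>i\<in>UNIV. P $ j' $ i * s j $ i) = (if j' = j then 1 else 0)" for j j'
      using arg_cong[OF s[of j], of "\<lambda>v. v $ j'"] by (simp add: PZ_def axis_def)
    define r where "r k = (\<chi> i. (if i = k then 1 else 0) - (\<Sum>j\<in>UNIV. P$j$k * s j $ i))" for k
    have rL: "r k \<in> Lat P" for k
    proof -
      have "(\<Sum>i\<in>UNIV. P $ j' $ i * r k $ i) = 0" for j'
      proof -
        have "(\<Sum>i\<in>UNIV. P $ j' $ i * r k $ i)
            = (\<Sum>i\<in>UNIV. P $ j' $ i * (if i = k then 1 else 0)) - (\<Sum>i\<in>UNIV. \<Sum>j\<in>UNIV. P$j$k * (P $ j' $ i * s j $ i))"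
          by (simp add: r_def right_diff_distrib sum_subtractf sum_distrib_left algebra_simps)
        also have "\<dots> = P $ j' $ k - (\<Sum>j\<in>UNIV. \<Sum>i\<in>UNIV. P$j$k * (P $ j' $ i * s j $ i))"
        proof -
          have "(\<Sum>i\<in>UNIV. P $ j' $ i * (if i = k then 1 else 0)) = (\<Sum>i\<in>UNIV. if i = k then P $ j' $ i else 0)"
            by (rule sum.cong) auto
          then have d: "(\<Sum>i\<in>UNIV. P $ j' $ i * (if i = k then 1 else 0)) = P $ j' $ k" by simp
          show ?thesis by (subst sum.swap) (simp add: d)
        qed
        also have "\<dots> = P $ j' $ k - (\<Sum>j\<in>UNIV. P$j$k * (\<Sum>i\<in>UNIV. P $ j' $ i * s j $ i))"
          by (simp add: sum_distrib_left)
        also have "\<dots> = 0" by (simp add: s' if_distrib cong: if_cong)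
        finally show ?thesis .
      qed
      then show ?thesis by (simp add: Lat_def PZ_def vec_eq_iff)
    qed
    show "{l. PR P l = 0} \<subseteq> span (ofintv ` Lat P)"
    proof
      fix q assume qK: "q \<in> {l. PR P l = 0}"
      have q0: "(\<Sum>k\<in>UNIV. of_int (P $ j $ k) * q $ k) = 0" for j
      proof -
        have "PR P q $ j = 0" using qK by simp
        then show ?thesis by (simp add: PR_comp)
      qed
      have "q = (\<Sum>k\<in>UNIV. q $ k *\<^sub>R ofintv (r k))"
      proof (subst vec_eq_iff, intro allI)
        fix i
        have "(\<Sum>k\<in>UNIV. q $ k *\<^sub>R ofintv (r k)) $ i = (\<Sum>k\<in>UNIV. q $ k * of_int (r k $ i))"
          by (simp add: sum_component)
        also have "\<dots> = (\<Sum>k\<in>UNIV. q $ k * (if i = k then 1 else 0)) - (\<Sum>k\<in>UNIV. \<Sum>j\<in>UNIV. of_int (s j $ i) * (of_int (P$j$k) * q $ k))"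
          by (simp add: r_def right_diff_distrib sum_subtractf sum_distrib_left algebra_simps of_int_ite)
        also have "\<dots> = q $ i - (\<Sum>j\<in>UNIV. \<Sum>k\<in>UNIV. of_int (s j $ i) * (of_int (P$j$k) * q $ k))"
        proof -
          have "(\<Sum>k\<in>UNIV. q $ k * (if i = k then 1 else 0)) = (\<Sum>k\<in>UNIV. if i = k then q $ k else 0)"
            by (rule sum.cong) auto
          then have d: "(\<Sum>k\<in>UNIV. q $ k * (if i = k then 1 else 0)) = q $ i" by simp
          show ?thesis by (subst sum.swap) (simp add: d)
        qed
        also have "\<dots> = q $ i - (\<Sum>j\<in>UNIV. of_int (s j $ i) * (\<Sum>k\<in>UNIV. of_int (P$j$k) * q $ k))"
          by (simp add: sum_distrib_left)
        also have "\<dots> = q $ i" by (simp add: q0)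
        finally show "q $ i = (\<Sum>k\<in>UNIV. q $ k *\<^sub>R ofintv (r k)) $ i" by simp
      qed
      also have "\<dots> \<in> span (ofintv ` Lat P)"
        by (intro span_sum span_scale span_base) (use rL in auto)
      finally show "q \<in> span (ofintv ` Lat P)" .
    qed
  qed
  then show ?thesis
    unfolding LR_def Lnu_eq span_linear_image[OF linear_nuR] by simp
qed

lemma Tphi_K:
  assumes surj: "surj (PZ P)" and w: "w \<in> Tphi P"
  shows "\<exists>l. PR P l = 0 \<and> w = Etor l"
proof -
  from w obtain q where q: "PR P q \<in> intvecs" "w = Etor q"
    by (auto simp: Tphi_def)
  define m0 where "m0 = (\<chi> j. \<lfloor>PR P q $ j\<rfloor>)"
  have m0: "ofintv m0 = PR P q"
    using q(1) int_vec_ofintv[of "PR P q"] by (simp add: intvecs_def m0_def)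
  obtain m where m: "PZ P m = m0" using surj by (metis surjD)
  have "PR P (q - ofintv m) = 0"
    by (simp add: PR_diff PR_ofintv m m0)
  moreover have "Etor (q - ofintv m) = Etor q"
    by (simp add: Etor_eq_iff)
  ultimately show ?thesis using q by metis
qed

lemma K_Tphi: "PR P l = 0 \<Longrightarrow> Etor l \<in> Tphi P"
  by (auto simp: Tphi_def intvecs_def)

lemma arr_type_Etor: "arr_type u (Etor q) = {i. dotR (u i) q \<in> \<int>}"
proof -
  have "Etor q \<in> arr_subtorus u i \<longleftrightarrow> dotR (u i) q \<in> \<int>" for i
  proof
    assume "Etor q \<in> arr_subtorus u i"
    then obtain q' where q': "Etor q = Etor q'" "dotR (u i) q' \<in> \<int>"
      by (auto simp: arr_subtorus_def)
    then have "q - q' = ofintv (\<chi> k. \<lfloor>(q - q')$k\<rfloor>)"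
      by (intro int_vec_ofintv) (simp add: Etor_eq_iff)
    then have "dotR (u i) q = dotR (u i) q' + dotR (u i) (ofintv (\<chi> k. \<lfloor>(q - q')$k\<rfloor>))"
      by (metis add_diff_cancel_left' diff_add_cancel dotR_add)
    then show "dotR (u i) q \<in> \<int>" using q'(2) by (simp add: dotR_ofintv)
  qed (auto simp: arr_subtorus_def)
  then show ?thesis by (simp add: arr_type_def)
qed

lemma norm_cis_diff_sq: "(norm (cis x - cis y))^2 = 2 - 2 * cos (x - y)"
proof -
  have "(norm (cis x - cis y))^2 = (cos x - cos y)^2 + (sin x - sin y)^2"
    by (simp add: cmod_power2)
  also have "\<dots> = (sin x ^2 + cos x ^2) + (sin y ^2 + cos y ^2) - 2 * (cos x * cos y + sin x * sin y)"
    by (simp add: power2_eq_square algebra_simps)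
  also have "\<dots> = 2 - 2 * cos (x - y)" by (simp add: cos_diff)
  finally show ?thesis .
qed

lemma cis_close:
  assumes t: "\<bar>a - b\<bar> \<le> 1/2" and e: "0 < e" "e \<le> 1/2"
    and n: "norm (cis (2*pi*a) - cis (2*pi*b)) < sqrt (2 - 2*cos(2*pi*e))"
  shows "\<bar>a - b\<bar> < e"
proof (rule ccontr)
  assume "\<not> \<bar>a - b\<bar> < e"
  then have ge: "e \<le> \<bar>a - b\<bar>" by simp
  have "cos (2*pi*(a - b)) = cos (2*pi*\<bar>a - b\<bar>)"
  proof (cases "a - b \<ge> 0")
    case False
    then have "2*pi*\<bar>a - b\<bar> = -(2*pi*(a - b))" by (simp add: algebra_simps)
    then show ?thesis by (metis cos_minus)
  qed simp
  also have "\<dots> \<le> cos (2*pi*e)"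
    by (rule cos_monotone_0_pi_le) (use ge t e in auto)
  finally have c: "cos (2*pi*(a - b)) \<le> cos (2*pi*e)" .
  have "2 - 2*cos(2*pi*e) \<le> (norm (cis (2*pi*a) - cis (2*pi*b)))^2"
    using c by (simp add: norm_cis_diff_sq right_diff_distrib)
  then have "sqrt (2 - 2*cos(2*pi*e)) \<le> norm (cis (2*pi*a) - cis (2*pi*b))"
    by (simp add: real_le_lsqrt real_sqrt_le_iff)
  with n show False by simp
qed

lemma cis_delta_pos: "0 < e \<Longrightarrow> e \<le> 1/2 \<Longrightarrow> 0 < sqrt (2 - 2*cos(2*pi*e))"
  using cos_monotone_0_pi[of 0 "2*pi*e"] by simp

lemma floor_ceiling_int: "\<lfloor>t\<rfloor> = \<lceil>t\<rceil> \<longleftrightarrow> (t::real) \<in> \<int>"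
proof
  assume h: "\<lfloor>t\<rfloor> = \<lceil>t\<rceil>"
  have a: "of_int \<lfloor>t\<rfloor> \<le> t" by simp
  have b: "t \<le> of_int \<lfloor>t\<rfloor>" using le_of_int_ceiling[of t] h by simp
  from a b have "t = of_int \<lfloor>t\<rfloor>" by linarith
  then show "t \<in> \<int>" by (metis Ints_of_int)
next
  assume "t \<in> \<int>"
  then obtain n where "t = of_int n" by (auto elim: Ints_cases)
  then show "\<lfloor>t\<rfloor> = \<lceil>t\<rceil>" by simp
qed

lemma ceiling_nonint: "(t::real) \<notin> \<int> \<Longrightarrow> \<lceil>t\<rceil> = \<lfloor>t\<rfloor> + 1"
proof -
  assume "t \<notin> \<int>"
  then have "t \<noteq> of_int \<lfloor>t\<rfloor>" by (metis Ints_of_int)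
  then have "of_int \<lfloor>t\<rfloor> < t" using of_int_floor_le[of t] by linarith
  then show ?thesis by (simp add: ceiling_eq_iff)
qed

definition thetaf :: "(real^'r \<Rightarrow> real^'d) \<Rightarrow> real^'r \<Rightarrow> complex^'d" where
  "thetaf g x = Etor (g x)"

lemma continuous_Etor: "continuous_on UNIV Etor"
  unfolding Etor_def by (intro continuous_intros)

context
  fixes u :: "'r::finite \<Rightarrow> int^'d::finite" and P :: "int^'d^'e::finite"
    and g :: "real^'r \<Rightarrow> real^'d"
  assumes surj: "surj (PZ P)" and g_lin: "linear g" and g_inv: "\<And>l. g (nuR u l) = l"
begin

lemma theta_nuR: "thetaf g (nuR u l) = Etor l"
  by (simp add: thetaf_def g_inv)

lemma LR_cases:
  assumes "x \<in> LR u P" obtains l where "PR P l = 0" "x = nuR u l"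
  using assms LR_eq[OF surj, of u] by auto

lemma theta_eq_iff:
  assumes x: "x \<in> LR u P" and y: "y \<in> LR u P"
  shows "thetaf g x = thetaf g y \<longleftrightarrow> x - y \<in> Lnu u P"
proof -
  obtain l where l: "PR P l = 0" "x = nuR u l" using x LR_cases by blast
  obtain l' where l': "PR P l' = 0" "y = nuR u l'" using y LR_cases by blast
  have "thetaf g x = thetaf g y \<longleftrightarrow> (\<forall>k. (l - l')$k \<in> \<int>)"
    by (simp add: l l' theta_nuR Etor_eq_iff)
  also have "\<dots> \<longleftrightarrow> x - y \<in> Lnu u P"
  proof
    assume h: "\<forall>k. (l - l')$k \<in> \<int>"
    define m where "m = (\<chi> k. \<lfloor>(l - l')$k\<rfloor>)"
    have m: "ofintv m = l - l'" using int_vec_ofintv[OF h] by (simp add: m_def)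
    have "ofintv (PZ P m) = ofintv 0"
      by (simp add: PR_ofintv[symmetric] m PR_diff l l')
    then have "m \<in> Lat P" by (simp add: Lat_def ofintv_inj)
    moreover have "x - y = ofintv (nuZ u m)"
      by (simp add: l l' nuR_diff[symmetric] m[symmetric] nuR_ofintv)
    ultimately show "x - y \<in> Lnu u P" by (auto simp: Lnu_def)
  next
    assume "x - y \<in> Lnu u P"
    then obtain m where m: "m \<in> Lat P" "x - y = ofintv (nuZ u m)" by (auto simp: Lnu_def)
    then have "nuR u (l - l') = nuR u (ofintv m)"
      by (simp add: nuR_diff l l' nuR_ofintv)
    then have "l - l' = ofintv m" by (metis g_inv)
    then show "\<forall>k. (l - l')$k \<in> \<int>" by simp
  qed
  finally show ?thesis .
qed

lemma theta_image: "thetaf g ` LR u P = Tphi P"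
proof
  show "thetaf g ` LR u P \<subseteq> Tphi P"
    by (auto elim!: LR_cases simp: theta_nuR K_Tphi)
  show "Tphi P \<subseteq> thetaf g ` LR u P"
  proof
    fix w assume "w \<in> Tphi P"
    then obtain l where "PR P l = 0" "w = Etor l" using Tphi_K[OF surj] by blast
    then show "w \<in> thetaf g ` LR u P"
      using LR_eq[OF surj, of u] theta_nuR by (metis (mono_tags, lifting) image_eqI mem_Collect_eq)
  qed
qed

lemma arr_theta: "x \<in> LR u P \<Longrightarrow> arr_type u (thetaf g x) = {i. x$i \<in> \<int>}"
  by (auto elim!: LR_cases simp: theta_nuR arr_type_Etor)

lemma LR_diff: "x \<in> LR u P \<Longrightarrow> y \<in> LR u P \<Longrightarrow> x - y \<in> LR u P"
  by (simp add: LR_def span_diff)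

lemma same_cell:
  assumes y: "y \<in> LR u P" and z: "z \<in> LR u P"
    and fc: "\<forall>i. \<lfloor>y$i\<rfloor> = \<lfloor>z$i\<rfloor> \<and> \<lceil>y$i\<rceil> = \<lceil>z$i\<rceil>"
    and yA: "thetaf g y \<in> thetaf g ` std_cell u P p"
  shows "thetaf g z \<in> thetaf g ` std_cell u P p"
proof -
  obtain c where c: "c \<in> std_cell u P p" "thetaf g y = thetaf g c" using yA by auto
  have cLR: "c \<in> LR u P" using c(1) by (simp add: std_cell_def)
  have "y - c \<in> Lnu u P" using theta_eq_iff[OF y cLR] c(2) by simp
  then obtain v where v: "y - c = ofintv v" by (auto simp: Lnu_def)
  define c' where "c' = z - (y - c)"
  have c'LR: "c' \<in> LR u P" unfolding c'_def by (intro LR_diff y z cLR)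
  have "c' \<in> std_cell u P p"
  proof -
    have "\<lfloor>c'$i\<rfloor> = \<lfloor>p$i\<rfloor> \<and> \<lceil>c'$i\<rceil> = \<lceil>p$i\<rceil>" for i
    proof -
      have ci: "c$i = y$i - of_int (v$i)" using arg_cong[OF v, of "\<lambda>w. w$i"] by simp
      have c'i: "c'$i = z$i - of_int (v$i)" using arg_cong[OF v, of "\<lambda>w. w$i"] by (simp add: c'_def)
      have "\<lfloor>c'$i\<rfloor> = \<lfloor>c$i\<rfloor>" "\<lceil>c'$i\<rceil> = \<lceil>c$i\<rceil>" using fc by (simp_all add: ci c'i)
      then show ?thesis using c(1) by (simp add: std_cell_def)
    qed
    then show ?thesis using c'LR by (simp add: std_cell_def)
  qed
  moreover have "thetaf g z = thetaf g c'"
    using theta_eq_iff[OF z c'LR] \<open>y - c \<in> Lnu u P\<close> by (simp add: c'_def)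
  ultimately show ?thesis by blast
qed

lemma convex_cell: "convex (std_cell u P p)"
proof -
  have sub: "subspace (LR u P)" by (simp add: LR_def)
  show ?thesis unfolding convex_def
  proof (intro ballI allI impI)
    fix x y :: "real^'r" and a b :: real
    assume x: "x \<in> std_cell u P p" and y: "y \<in> std_cell u P p" and ab: "0 \<le> a" "0 \<le> b" "a + b = 1"
    have LRxy: "a *\<^sub>R x + b *\<^sub>R y \<in> LR u P"
      using x y sub by (simp add: std_cell_def subspace_add subspace_scale)
    have "\<lfloor>(a *\<^sub>R x + b *\<^sub>R y)$i\<rfloor> = \<lfloor>p$i\<rfloor> \<and> \<lceil>(a *\<^sub>R x + b *\<^sub>R y)$i\<rceil> = \<lceil>p$i\<rceil>" for i
    proof -
      have fx: "\<lfloor>x$i\<rfloor> = \<lfloor>p$i\<rfloor>" "\<lceil>x$i\<rceil> = \<lceil>p$i\<rceil>" and fy: "\<lfloor>y$i\<rfloor> = \<lfloor>p$i\<rfloor>" "\<lceil>y$i\<rceil> = \<lceil>p$i\<rceil>"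
        using x y by (auto simp: std_cell_def)
      have b1: "of_int \<lfloor>p$i\<rfloor> \<le> x$i" "x$i < of_int \<lfloor>p$i\<rfloor> + 1" "of_int \<lceil>p$i\<rceil> - 1 < x$i" "x$i \<le> of_int \<lceil>p$i\<rceil>"
        using fx by (simp_all add: floor_eq_iff ceiling_eq_iff)
      have b2: "of_int \<lfloor>p$i\<rfloor> \<le> y$i" "y$i < of_int \<lfloor>p$i\<rfloor> + 1" "of_int \<lceil>p$i\<rceil> - 1 < y$i" "y$i \<le> of_int \<lceil>p$i\<rceil>"
        using fy by (simp_all add: floor_eq_iff ceiling_eq_iff)
      have e: "(a *\<^sub>R x + b *\<^sub>R y)$i = a * x$i + b * y$i" by simp
      have "a * x$i + b * y$i < of_int \<lfloor>p$i\<rfloor> + 1"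
        by (rule convex_bound_lt) (use b1 b2 ab in auto)
      moreover have "a * x$i + b * y$i \<le> of_int \<lceil>p$i\<rceil>"
        by (rule convex_bound_le) (use b1 b2 ab in auto)
      moreover have "a * (- x$i) + b * (- y$i) \<le> - of_int \<lfloor>p$i\<rfloor>"
        by (rule convex_bound_le) (use b1 b2 ab in auto)
      moreover have "a * (- x$i) + b * (- y$i) < - (of_int \<lceil>p$i\<rceil> - 1)"
        by (rule convex_bound_lt) (use b1 b2 ab in auto)
      ultimately show ?thesis unfolding e by (simp add: floor_eq_iff ceiling_eq_iff)
    qed
    then show "a *\<^sub>R x + b *\<^sub>R y \<in> std_cell u P p" using LRxy by (simp add: std_cell_def)
  qed
qed

lemma continuous_theta: "continuous_on UNIV (thetaf g)"
proof -
  have "continuous_on UNIV g" using g_lin by (simp add: linear_continuous_on linear_conv_bounded_linear)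
  then show ?thesis unfolding thetaf_def
    using continuous_on_compose[of UNIV g Etor] continuous_Etor
    by (metis (no_types, lifting) comp_apply continuous_on_cong continuous_on_subset subset_UNIV)
qed

end


context
  fixes u :: "'r::finite \<Rightarrow> int^'d::finite" and P :: "int^'d^'e::finite"
    and g :: "real^'r \<Rightarrow> real^'d"
  assumes surj: "surj (PZ P)" and g_lin: "linear g" and g_inv: "\<And>l. g (nuR u l) = l"
begin

lemma local_const:
  assumes wT: "w \<in> Tphi P"
  shows "\<exists>\<delta>>0. \<forall>w'\<in>Tphi P. dist w' w < \<delta> \<longrightarrow> arr_type u w' = arr_type u w \<longrightarrow>
           (w' \<in> thetaf g ` std_cell u P p \<longleftrightarrow> w \<in> thetaf g ` std_cell u P p)"
proof -
  obtain l where l: "PR P l = 0" "w = Etor l" using Tphi_K[OF surj wT] by blast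
  define x where "x = nuR u l"
  have xLR: "x \<in> LR u P" using LR_eq[OF surj, of u] l by (auto simp: x_def)
  have wx: "thetaf g x = w" using l by (simp add: x_def theta_nuR[OF surj g_lin g_inv])
  define lo where "lo i = (if x$i \<in> \<int> then x$i - 1 else of_int \<lfloor>x$i\<rfloor>)" for i
  define hi where "hi i = (if x$i \<in> \<int> then x$i + 1 else of_int \<lfloor>x$i\<rfloor> + 1)" for i
  define W where "W = (\<Inter>i. {q. lo i < nuR u q $ i} \<inter> {q. nuR u q $ i < hi i}) \<inter>
                      (\<Inter>j. {q. -1 < PR P q $ j} \<inter> {q. PR P q $ j < 1})"
  have cnu: "continuous_on UNIV (\<lambda>q. nuR u q $ i)" for i
    using linear_nuR[of u] by (intro continuous_on_component linear_continuous_on) (simp add: linear_conv_bounded_linear)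
  have cPR: "continuous_on UNIV (\<lambda>q. PR P q $ j)" for j
    using linear_PR[of P] by (intro continuous_on_component linear_continuous_on) (simp add: linear_conv_bounded_linear)
  have "open W" unfolding W_def
    by (intro open_Int open_INT ballI finite open_Collect_less continuous_on_const cnu cPR)
  moreover have "l \<in> W"
  proof -
    have "lo i < x$i \<and> x$i < hi i" for i
    proof (cases "x$i \<in> \<int>")
      case False
      then have "x$i \<noteq> of_int \<lfloor>x$i\<rfloor>" by (metis Ints_of_int)
      then show ?thesis using False of_int_floor_le[of "x$i"] floor_less_one[of "x$i"]
        by (simp add: lo_def hi_def) (smt (verit) floor_correct)
    qed (simp add: lo_def hi_def)
    then show ?thesis by (simp add: W_def l x_def)
  qed
  ultimately obtain \<epsilon> where \<epsilon>: "\<epsilon> > 0" "ball l \<epsilon> \<subseteq> W" using open_contains_ball by blast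
  define \<eta> where "\<eta> = min (\<epsilon> / real CARD('d)) (1/4)"
  have \<eta>: "0 < \<eta>" "\<eta> \<le> 1/2" "real CARD('d) * \<eta> \<le> \<epsilon>"
    using \<epsilon> by (auto simp: \<eta>_def min_def field_simps)
  define \<delta> where "\<delta> = sqrt (2 - 2*cos(2*pi*\<eta>))"
  have \<delta>: "\<delta> > 0" using cis_delta_pos \<eta> by (simp add: \<delta>_def)
  show ?thesis
  proof (intro exI[of _ \<delta>] conjI \<delta> ballI impI)
    fix w' assume w'T: "w' \<in> Tphi P" and dw: "dist w' w < \<delta>" and at: "arr_type u w' = arr_type u w"
    obtain l'' where l'': "PR P l'' \<in> intvecs" "w' = Etor l''" using w'T by (auto simp: Tphi_def)
    define m where "m = (\<chi> k. round (l$k - l''$k))"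
    define l' where "l' = l'' + ofintv m"
    have wl': "w' = Etor l'" using l'' by (simp add: l'_def Etor_eq_iff)
    have close: "\<bar>l'$k - l$k\<bar> < \<eta>" for k
    proof (rule cis_close)
      show "\<bar>l'$k - l$k\<bar> \<le> 1/2"
        using of_int_round_abs_le[of "l$k - l''$k"] by (simp add: l'_def m_def) argo
      have "norm (w'$k - w$k) \<le> dist w' w"
        using Finite_Cartesian_Product.norm_nth_le[of "w' - w" k] by (simp add: dist_norm)
      then show "norm (cis (2*pi*l'$k) - cis (2*pi*l$k)) < sqrt (2 - 2*cos(2*pi*\<eta>))"
        using dw wl' l by (simp add: Etor_def \<delta>_def)
    qed (use \<eta> in auto)
    have "norm (l - l') \<le> (\<Sum>k\<in>UNIV. \<bar>(l - l')$k\<bar>)" by (rule norm_le_l1_cart)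
    also have "\<dots> < (\<Sum>k\<in>(UNIV::'d set). \<eta>)"
      by (rule sum_strict_mono) (use close in \<open>auto simp: abs_minus_commute\<close>)
    also have "\<dots> \<le> \<epsilon>" using \<eta> by simp
    finally have "l' \<in> ball l \<epsilon>" by (simp add: dist_norm)
    then have l'W: "l' \<in> W" using \<epsilon> by blast
    have PRl': "PR P l' = 0"
    proof -
      have "PR P l' = PR P l'' + ofintv (PZ P m)" by (simp add: l'_def PR_add PR_ofintv)
      then have int: "PR P l' $ j \<in> \<int>" for j using l''(1) by (simp add: intvecs_def)
      have "PR P l' $ j = 0" for j
      proof -
        obtain n where n: "PR P l' $ j = of_int n" using int[of j] by (auto elim: Ints_cases)
        have "-1 < PR P l' $ j" "PR P l' $ j < 1" using l'W by (auto simp: W_def)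
        then have "n = 0" using n by simp
        then show ?thesis using n by simp
      qed
      then show ?thesis by (simp add: vec_eq_iff)
    qed
    define x' where "x' = nuR u l'"
    have x'LR: "x' \<in> LR u P" using LR_eq[OF surj, of u] PRl' by (auto simp: x'_def)
    have wx': "thetaf g x' = w'" using wl' by (simp add: x'_def theta_nuR[OF surj g_lin g_inv])
    have intiff: "x'$i \<in> \<int> \<longleftrightarrow> x$i \<in> \<int>" for i
      using at arr_theta[OF surj g_lin g_inv xLR] arr_theta[OF surj g_lin g_inv x'LR] wx wx'
      by (metis mem_Collect_eq)
    have fc: "\<lfloor>x'$i\<rfloor> = \<lfloor>x$i\<rfloor> \<and> \<lceil>x'$i\<rceil> = \<lceil>x$i\<rceil>" for i
    proof -
      have b: "lo i < x'$i" "x'$i < hi i" using l'W by (auto simp: W_def x'_def)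
      show ?thesis
      proof (cases "x$i \<in> \<int>")
        case True
        then obtain a where a: "x$i = of_int a" by (auto elim: Ints_cases)
        obtain b' where b': "x'$i = of_int b'" using True intiff by (auto elim: Ints_cases)
        have "a = b'" using b a b' True by (simp add: lo_def hi_def)
        then show ?thesis using a b' by simp
      next
        case False
        then have nx': "x'$i \<notin> \<int>" using intiff by simp
        have fl: "\<lfloor>x'$i\<rfloor> = \<lfloor>x$i\<rfloor>" using b False by (simp add: lo_def hi_def floor_eq_iff)
        then show ?thesis using ceiling_nonint[OF False] ceiling_nonint[OF nx'] by simp
      qed
    qed
    show "w' \<in> thetaf g ` std_cell u P p \<longleftrightarrow> w \<in> thetaf g ` std_cell u P p"
      using same_cell[OF surj g_lin g_inv x'LR xLR] same_cell[OF surj g_lin g_inv xLR x'LR] fc wx wx'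
      by metis
  qed
qed

lemma stratum:
  assumes pLR: "p \<in> LR u P"
  shows "thetaf g ` std_cell u P p = hhl_stratum u P (thetaf g p)"
proof -
  define A where "A = thetaf g ` std_cell u P p"
  define S where "S = {w \<in> Tphi P. arr_type u w = arr_type u (thetaf g p)}"
  have pc: "p \<in> std_cell u P p" using pLR by (simp add: std_cell_def)
  have AS: "A \<subseteq> S"
  proof
    fix w assume "w \<in> A"
    then obtain c where c: "c \<in> std_cell u P p" "w = thetaf g c" by (auto simp: A_def)
    have cLR: "c \<in> LR u P" using c by (simp add: std_cell_def)
    have "w \<in> Tphi P" using c cLR theta_image[OF surj g_lin g_inv] by blast
    moreover have "arr_type u w = arr_type u (thetaf g p)"
      using c(1) by (simp add: c(2) arr_theta[OF surj g_lin g_inv cLR] arr_theta[OF surj g_lin g_inv pLR]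
          std_cell_def floor_ceiling_int[symmetric])
    ultimately show "w \<in> S" by (simp add: S_def)
  qed
  have conA: "connected A" unfolding A_def
    by (rule connected_continuous_image)
      (use continuous_theta[OF surj g_lin g_inv] convex_connected convex_cell[OF surj g_lin g_inv] in
        \<open>auto intro: continuous_on_subset\<close>)
  have pA: "thetaf g p \<in> A" using pc by (simp add: A_def)
  define C where "C = connected_component_set S (thetaf g p)"
  have "A \<subseteq> C" unfolding C_def by (rule connected_component_maximal[OF pA conA AS])
  moreover have "C \<subseteq> A"
  proof -
    have CS: "C \<subseteq> S" by (simp add: C_def connected_component_subset)
    have pC: "thetaf g p \<in> C" using \<open>A \<subseteq> C\<close> pA by blast
    have loc: "\<exists>\<delta>>0. \<forall>w'\<in>C. dist w' w < \<delta> \<longrightarrow> (w' \<in> A \<longleftrightarrow> w \<in> A)" if "w \<in> C" for w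
    proof -
      have wS: "w \<in> S" using that CS by blast
      then obtain \<delta> where \<delta>: "\<delta> > 0" "\<forall>w'\<in>Tphi P. dist w' w < \<delta> \<longrightarrow> arr_type u w' = arr_type u w \<longrightarrow>
           (w' \<in> A \<longleftrightarrow> w \<in> A)"
        using local_const[of w p] by (auto simp: S_def A_def)
      show ?thesis
      proof (intro exI[of _ \<delta>] conjI \<delta>(1) ballI impI)
        fix w' assume "w' \<in> C" "dist w' w < \<delta>"
        then have "w' \<in> S" using CS by blast
        then show "w' \<in> A \<longleftrightarrow> w \<in> A" using \<delta>(2) wS \<open>dist w' w < \<delta>\<close> by (auto simp: S_def)
      qed
    qed
    have op: "openin (top_of_set C) (C \<inter> A)"
      unfolding openin_euclidean_subtopology_iff
    proof (intro conjI ballI)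
      fix w assume "w \<in> C \<inter> A"
      then obtain \<delta> where "\<delta> > 0" "\<forall>w'\<in>C. dist w' w < \<delta> \<longrightarrow> (w' \<in> A \<longleftrightarrow> w \<in> A)" using loc by blast
      then show "\<exists>e>0. \<forall>x'\<in>C. dist x' w < e \<longrightarrow> x' \<in> C \<inter> A" using \<open>w \<in> C \<inter> A\<close> by blast
    qed auto
    have op2: "openin (top_of_set C) (C - (C \<inter> A))"
      unfolding openin_euclidean_subtopology_iff
    proof (intro conjI ballI)
      fix w assume "w \<in> C - (C \<inter> A)"
      then obtain \<delta> where "\<delta> > 0" "\<forall>w'\<in>C. dist w' w < \<delta> \<longrightarrow> (w' \<in> A \<longleftrightarrow> w \<in> A)" using loc by blast
      then show "\<exists>e>0. \<forall>x'\<in>C. dist x' w < e \<longrightarrow> x' \<in> C - (C \<inter> A)" using \<open>w \<in> C - (C \<inter> A)\<close> by blast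
    qed auto
    have cl: "closedin (top_of_set C) (C \<inter> A)"
      using op2 by (simp add: closedin_def)
    have "connected C" by (simp add: C_def)
    then have "C \<inter> A = {} \<or> C \<inter> A = C" using op cl connected_clopen by blast
    then show ?thesis using pC pA by blast
  qed
  ultimately show ?thesis by (simp add: A_def C_def S_def hhl_stratum_def)
qed

lemma lb_one:
  assumes pLR: "p \<in> LR u P" and q: "Etor q \<in> thetaf g ` std_cell u P p"
  shows "same_line_bundle u (hhl_divisor u q) (- psi p)"
proof -
  obtain c where c: "c \<in> std_cell u P p" "Etor q = thetaf g c" using q by auto
  have cLR: "c \<in> LR u P" using c by (simp add: std_cell_def)
  obtain l where l: "PR P l = 0" "c = nuR u l" using LR_cases[OF surj g_lin g_inv cLR] by blast
  have "Etor q = Etor l" using c l theta_nuR[OF surj g_lin g_inv] by simp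
  then have eq: "q - l = ofintv (\<chi> k. \<lfloor>(q - l)$k\<rfloor>)" by (intro int_vec_ofintv) (simp add: Etor_eq_iff)
  define m where "m = (\<chi> k. \<lfloor>(q - l)$k\<rfloor>)"
  have "q = l + (q - l)" by simp
  also have "\<dots> = l + ofintv m" using eq by (simp add: m_def)
  finally have m: "q = l + ofintv m" .
  have "(hhl_divisor u q - (- psi p)) $ i = nuZ u (- m) $ i" for i
  proof -
    have "hhl_divisor u q $ i = \<lfloor>- c$i - of_int (dotZ (u i) m)\<rfloor>"
      by (simp add: hhl_divisor_def m dotR_add dotR_ofintv l algebra_simps)
    also have "\<dots> = - \<lceil>c$i\<rceil> - dotZ (u i) m" by (simp add: floor_minus)
    also have "\<dots> = - \<lceil>p$i\<rceil> - dotZ (u i) m" using c(1) by (simp add: std_cell_def)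
    finally show ?thesis by (simp add: psi_def nuZ_minus)
  qed
  then show ?thesis by (auto simp: same_line_bundle_def vec_eq_iff)
qed

lemma lb_two:
  assumes "nuR u l \<in> std_cell u P p"
  shows "hhl_divisor u l = - psi p"
  using assms by (simp add: vec_eq_iff hhl_divisor_def psi_def std_cell_def floor_minus)

end

theorem lemma4p1:
  fixes u :: "'r::finite \<Rightarrow> int^'d::finite"
    and \<Sigma> :: "'r set set"
    and P :: "int^'d^'e::finite"
  assumes rays_prim: "\<forall>i. primitive (u i)"
    and rays_distinct: "inj u"
    and fan: "smooth_fan u \<Sigma>"
    and no_torus_factors: "span (range (\<lambda>i. ofintv (u i))) = UNIV"
    and dual_surj: "surj (PZ P)"
  shows "LR u P = nuR u ` {l. PR P l = 0} \<and>
    (\<exists>\<theta> :: real^'r \<Rightarrow> complex^'d.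
       (\<forall>l. PR P l = 0 \<longrightarrow> \<theta> (nuR u l) = Etor l) \<and>
       \<theta> ` LR u P = Tphi P \<and>
       (\<forall>p\<in>LR u P. \<forall>p'\<in>LR u P. \<theta> p = \<theta> p' \<longleftrightarrow> p - p' \<in> Lnu u P) \<and>
       (\<forall>p\<in>LR u P. \<theta> ` std_cell u P p = hhl_stratum u P (\<theta> p)) \<and>
       (\<forall>p\<in>LR u P. \<forall>q. Etor q \<in> \<theta> ` std_cell u P p \<longrightarrow>
            same_line_bundle u (hhl_divisor u q) (- psi p)) \<and>
       (\<forall>p\<in>LR u P. \<forall>l. PR P l = 0 \<and> nuR u l \<in> std_cell u P p \<longrightarrow>
            hhl_divisor u l = - psi p))"
proof -
  obtain g where g: "linear g" "g \<circ> nuR u = id"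
    using linear_injective_left_inverse[OF linear_nuR nuR_inj[OF no_torus_factors]] by blast
  have ginv: "\<And>l. g (nuR u l) = l" using g(2) by (metis comp_apply id_apply)
  have A: "\<forall>l. PR P l = 0 \<longrightarrow> thetaf g (nuR u l) = Etor l"
    using theta_nuR[OF dual_surj g(1) ginv] by blast
  have B: "thetaf g ` LR u P = Tphi P" by (rule theta_image[OF dual_surj g(1) ginv])
  have C: "\<forall>p\<in>LR u P. \<forall>p'\<in>LR u P. thetaf g p = thetaf g p' \<longleftrightarrow> p - p' \<in> Lnu u P"
    using theta_eq_iff[OF dual_surj g(1) ginv] by blast
  have D: "\<forall>p\<in>LR u P. thetaf g ` std_cell u P p = hhl_stratum u P (thetaf g p)"
    using stratum[OF dual_surj g(1) ginv] by blast
  have E: "\<forall>p\<in>LR u P. \<forall>q. Etor q \<in> thetaf g ` std_cell u P p \<longrightarrow>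
            same_line_bundle u (hhl_divisor u q) (- psi p)"
    using lb_one[OF dual_surj g(1) ginv] by blast
  have F: "\<forall>p\<in>LR u P. \<forall>l. PR P l = 0 \<and> nuR u l \<in> std_cell u P p \<longrightarrow>
            hhl_divisor u l = - psi p"
    using lb_two[OF dual_surj g(1) ginv] by blast
  show ?thesis
    apply (rule conjI)
     apply (rule LR_eq[OF dual_surj])
    apply (rule exI[of _ "thetaf g"])
    apply (intro conjI)
         apply (fact A)
        apply (fact B)
       apply (fact C)
      apply (fact D)
     apply (fact E)
    apply (fact F)
    done
qed

end
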